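(* Let $m\in\mathbb N$, $p_1,\dots,p_m\in[1,\infty)$ with $1/p=\sum_{k=1}^m1/p_k$. Assume $\omega_1,\dots,\omega_m\in A_\infty$ and $v_{\vec\omega}=\prod_{i=1}^m\omega_i^{p/p_i}\in A_\infty$. Then for every ball $B\subseteq\mathbb R^n$, $$\prod_{i=1}^m\Big(\int_B\omega_i(x)\,dx\Big)^{p/p_i}\approx\int_Bv_{\vec\omega}(x)\,dx,$$ with implicit constants independent of $B$.
   Context: $A_\infty=\bigcup_{1\le p<\infty}A_p$, the union of the Muckenhoupt weight classes on $\mathbb R^n$. $A\approx B$ means $c^{-1}B\le A\le cB$ for a constant $c>0$. *)

theory Defs
  imports "HOL-Analysis.Analysis"
begin

definition weight :: "('a::euclidean_space \<Rightarrow> real) \<Rightarrow> bool" where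
  "weight w \<longleftrightarrow> w \<in> borel_measurable lebesgue \<and> (AE x in lebesgue. 0 < w x)
     \<and> (\<forall>x r. set_integrable lebesgue (cball x r) w)"

definition avg :: "'a::euclidean_space set \<Rightarrow> ('a \<Rightarrow> real) \<Rightarrow> real" where
  "avg B f = (LINT y:B|lebesgue. f y) / measure lebesgue B"

definition A_p :: "real \<Rightarrow> ('a::euclidean_space \<Rightarrow> real) \<Rightarrow> bool" where
  "A_p p w \<longleftrightarrow> weight w \<and>
     (if p = 1 then
        (\<exists>C. \<forall>x r. r > 0 \<longrightarrow> (AE y in lebesgue. y \<in> ball x r \<longrightarrow> avg (ball x r) w \<le> C * w y))
      else
        (\<forall>x r. set_integrable lebesgue (cball x r) (\<lambda>y. w y powr (-1 / (p - 1)))) \<and>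
        (\<exists>C. \<forall>x r. r > 0 \<longrightarrow>
           avg (ball x r) w * (avg (ball x r) (\<lambda>y. w y powr (-1 / (p - 1)))) powr (p - 1) \<le> C))"

definition A_infty :: "('a::euclidean_space \<Rightarrow> real) \<Rightarrow> bool" where
  "A_infty w \<longleftrightarrow> (\<exists>p. 1 \<le> p \<and> A_p p w)"

end

theory Submission
  imports Defs
begin

lemma ball_facts:
  fixes x :: "'a::euclidean_space" assumes "r > 0"
  shows "ball x r \<in> sets lebesgue" "emeasure lebesgue (ball x r) < \<infinity>"
    "measure lebesgue (ball x r) > 0"
proof -
  show "ball x r \<in> sets lebesgue" by (simp add: fmeasurableD)
  show "emeasure lebesgue (ball x r) < \<infinity>"
    using lmeasurable_ball[of x r] by (simp add: fmeasurable_def)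
  show "measure lebesgue (ball x r) > 0"
    using content_ball_pos[OF assms, of x] by simp
qed

lemma set_integrable_const_fin:
  assumes "B \<in> sets lebesgue" "emeasure lebesgue B < \<infinity>"
  shows "set_integrable lebesgue B (\<lambda>y. c::real)"
  unfolding set_integrable_def
  using integrable_real_indicator[OF assms] by (simp add: integrable_mult_left)

lemma exp_jensen_set:
  assumes B: "B \<in> sets lebesgue" "emeasure lebesgue B < \<infinity>" "measure lebesgue B > 0"
   and f: "set_integrable lebesgue B f" "set_integrable lebesgue B (\<lambda>y. exp (f y))"
  shows "measure lebesgue B * exp (avg B f) \<le> (LINT y:B|lebesgue. exp (f y))"
proof -
  define a where "a = avg B f"
  define \<mu> where "\<mu> = measure lebesgue B"
  have ia: "(LINT y:B|lebesgue. f y) = \<mu> * a" using B(3) unfolding a_def avg_def \<mu>_def by simp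
  have int1: "set_integrable lebesgue B (\<lambda>y. exp a * (1 - a) + exp a * f y)"
    using set_integrable_const_fin[OF B(1,2)] f(1)
    by (intro set_integral_add) auto
  have "(LINT y:B|lebesgue. exp a * (1 - a) + exp a * f y) = exp a * (1 - a) * \<mu> + exp a * (\<mu> * a)"
  proof -
    have "(LINT y:B|lebesgue. exp a * (1 - a) + exp a * f y) = (LINT y:B|lebesgue. exp a * (1 - a)) + (LINT y:B|lebesgue. exp a * f y)"
      using set_integrable_const_fin[OF B(1,2)] f(1) by (intro set_integral_add) auto
    also have "(LINT y:B|lebesgue. exp a * (1 - a)) = \<mu> * (exp a * (1 - a))"
      unfolding \<mu>_def using set_integral_const[OF B(1), of "exp a * (1 - a)"] B(2)
      by (simp only: real_scaleR_def less_top)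
    also have "(LINT y:B|lebesgue. exp a * f y) = exp a * (\<mu> * a)"
      using ia by simp
    finally show ?thesis by simp
  qed
  also have "\<dots> = \<mu> * exp a" by (simp add: algebra_simps)
  finally have eq: "(LINT y:B|lebesgue. exp a * (1 - a) + exp a * f y) = \<mu> * exp a" .
  have "(LINT y:B|lebesgue. exp a * (1 - a) + exp a * f y) \<le> (LINT y:B|lebesgue. exp (f y))"
  proof (rule set_integral_mono[OF int1 f(2)])
    fix y assume "y \<in> B"
    have "exp a * (1 + (f y - a)) \<le> exp a * exp (f y - a)"
      by (intro mult_left_mono exp_ge_add_one_self) auto
    then show "exp a * (1 - a) + exp a * f y \<le> exp (f y)"
      by (simp add: exp_diff algebra_simps)
  qed
  then show ?thesis using eq unfolding \<mu>_def a_def by simp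
qed


lemma weight_ball_int:
  fixes w :: "'a::euclidean_space \<Rightarrow> real"
  assumes "weight w" shows "set_integrable lebesgue (ball x r) w"
  using assms unfolding weight_def
  by (meson ball_subset_cball fmeasurableD lmeasurable_ball set_integrable_subset)

lemma weight_pos_int:
  fixes w :: "'a::euclidean_space \<Rightarrow> real"
  assumes "weight w" "r > 0"
  shows "(LINT y:ball x r|lebesgue. w y) > 0"
proof -
  let ?B = "ball x r"
  note bf = ball_facts[OF assms(2), of x]
  have wm: "w \<in> borel_measurable lebesgue" and wp: "AE y in lebesgue. 0 < w y"
    using assms(1) unfolding weight_def by auto
  have int: "integrable lebesgue (\<lambda>y. indicator ?B y *\<^sub>R w y)"
    using weight_ball_int[OF assms(1)] unfolding set_integrable_def .
  have nn: "AE y in lebesgue. 0 \<le> indicator ?B y *\<^sub>R w y"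
    using wp by eventually_elim (auto simp: indicator_def)
  have ge: "(LINT y:?B|lebesgue. w y) \<ge> 0"
    unfolding set_lebesgue_integral_def using nn by (rule integral_nonneg_AE)
  show ?thesis
  proof (rule ccontr)
    assume "\<not> ?thesis"
    then have "integral\<^sup>L lebesgue (\<lambda>y. indicator ?B y *\<^sub>R w y) = 0"
      using ge unfolding set_lebesgue_integral_def by simp
    then have "AE y in lebesgue. indicator ?B y *\<^sub>R w y = 0"
      using integral_nonneg_eq_0_iff_AE[OF int nn] by simp
    then have "AE y in lebesgue. y \<notin> ?B"
      using wp by eventually_elim (auto simp: indicator_def)
    then have "emeasure lebesgue ?B = 0"
      using AE_iff_measurable[OF bf(1), of "\<lambda>y. y \<notin> ?B"] by (simp add: ball_def)
    then show False using bf(3) by (simp add: measure_def)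
  qed
qed


lemma Ainf_rev:
  fixes w :: "'a::euclidean_space \<Rightarrow> real"
  assumes "A_infty w"
  shows "\<exists>C>0. \<forall>x r. r > 0 \<longrightarrow> set_integrable lebesgue (ball x r) (\<lambda>y. ln (w y))
           \<and> avg (ball x r) w \<le> C * exp (avg (ball x r) (\<lambda>y. ln (w y)))"
proof -
  obtain p where p: "1 \<le> p" "A_p p w" using assms unfolding A_infty_def by blast
  have wt: "weight w" using p(2) unfolding A_p_def by blast
  have wm [measurable]: "w \<in> borel_measurable lebesgue" and wp: "AE y in lebesgue. 0 < w y"
    using wt unfolding weight_def by auto
  have lnm [measurable]: "(\<lambda>y. ln (w y)) \<in> borel_measurable lebesgue" by measurable
  show ?thesis
  proof (cases "p = 1")
    case True
    then obtain C0 where C0: "\<forall>x r. r > 0 \<longrightarrow> (AE y in lebesgue. y \<in> ball x r \<longrightarrow> avg (ball x r) w \<le> C0 * w y)"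
      using p(2) unfolding A_p_def by auto
    define C1 where "C1 = max C0 1"
    have C1: "C1 > 0" unfolding C1_def by simp
    show ?thesis
    proof (rule exI[of _ C1], rule conjI[OF C1], intro allI impI)
      fix x :: 'a and r :: real assume r: "r > 0"
      let ?B = "ball x r"
      note bf = ball_facts[OF r, of x]
      define A where "A = avg ?B w"
      have Apos: "A > 0" using weight_pos_int[OF wt r] bf(3) unfolding A_def avg_def by simp
      have ae: "AE y in lebesgue. y \<in> ?B \<longrightarrow> ln (A / C1) \<le> ln (w y) \<and> 0 < w y"
        using C0[THEN spec[of _ x], THEN spec[of _ r], THEN mp, OF r] wp
      proof eventually_elim
        case (elim y)
        show ?case
        proof
          assume "y \<in> ?B"
          then have h: "A \<le> C0 * w y" "0 < w y" using elim A_def by auto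
          have "C0 * w y \<le> C1 * w y" unfolding C1_def using h(2) by (intro mult_right_mono) auto
          then have "A \<le> C1 * w y" using h by linarith
          then have "A / C1 \<le> w y" using C1 by (simp add: pos_divide_le_eq mult.commute)
          then show "ln (A / C1) \<le> ln (w y) \<and> 0 < w y" using Apos C1 h(2) by simp
        qed
      qed
      define k where "k = \<bar>ln (A / C1)\<bar>"
      have int: "set_integrable lebesgue ?B (\<lambda>y. ln (w y))"
      proof (rule set_integrable_bound[where f="\<lambda>y. w y + k"])
        show "set_integrable lebesgue ?B (\<lambda>y. w y + k)"
          using weight_ball_int[OF wt] set_integrable_const_fin[OF bf(1,2)] by (intro set_integral_add) auto
        show "set_borel_measurable lebesgue ?B (\<lambda>y. ln (w y))"
          unfolding set_borel_measurable_def using bf(1) by measurable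
        show "AE y in lebesgue. y \<in> ?B \<longrightarrow> norm (ln (w y)) \<le> norm (w y + k)"
          using ae
        proof eventually_elim
          case (elim y)
          show ?case
          proof
            assume "y \<in> ?B"
            then have h: "ln (A / C1) \<le> ln (w y)" "0 < w y" using elim by auto
            have "ln (w y) \<le> w y - 1" using h(2) by (rule ln_le_minus_one)
            moreover have "- k \<le> ln (w y)" using h(1) unfolding k_def by linarith
            moreover have "k \<ge> 0" unfolding k_def by simp
            ultimately show "norm (ln (w y)) \<le> norm (w y + k)" using h(2) by simp
          qed
        qed
      qed
      have "(LINT y:?B|lebesgue. ln (A / C1)) \<le> (LINT y:?B|lebesgue. ln (w y))"
        by (rule set_integral_mono_AE[OF set_integrable_const_fin[OF bf(1,2)] int])
           (use ae in \<open>eventually_elim, auto\<close>)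
      moreover have "(LINT y:?B|lebesgue. ln (A / C1)) = measure lebesgue ?B * ln (A / C1)"
        using set_integral_const[OF bf(1), of "ln (A / C1)"] bf(2) by (simp only: real_scaleR_def less_top)
      ultimately have "ln (A / C1) \<le> avg ?B (\<lambda>y. ln (w y))"
        unfolding avg_def using bf(3) by (simp add: pos_le_divide_eq mult.commute)
      then have "exp (ln (A / C1)) \<le> exp (avg ?B (\<lambda>y. ln (w y)))" by simp
      then have "A / C1 \<le> exp (avg ?B (\<lambda>y. ln (w y)))" using Apos C1 by simp
      then have "A \<le> C1 * exp (avg ?B (\<lambda>y. ln (w y)))" using C1 by (simp add: pos_divide_le_eq mult.commute)
      then show "set_integrable lebesgue ?B (\<lambda>y. ln (w y)) \<and> avg ?B w \<le> C1 * exp (avg ?B (\<lambda>y. ln (w y)))"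
        using int A_def by simp
    qed
  next
    case False
    then have p1: "p > 1" using p(1) by simp
    have ui: "\<forall>x r. set_integrable lebesgue (cball x r) (\<lambda>y. w y powr (-1 / (p - 1)))"
      and "\<exists>C. \<forall>x r. r > 0 \<longrightarrow>
           avg (ball x r) w * (avg (ball x r) (\<lambda>y. w y powr (-1 / (p - 1)))) powr (p - 1) \<le> C"
      using p(2) False unfolding A_p_def by auto
    then obtain C0 where C0: "\<forall>x r. r > 0 \<longrightarrow>
           avg (ball x r) w * (avg (ball x r) (\<lambda>y. w y powr (-1 / (p - 1)))) powr (p - 1) \<le> C0"
      by blast
    define C1 where "C1 = max C0 1"
    have C1: "C1 > 0" unfolding C1_def by simp
    define s where "s = 1 / (p - 1)"
    have s: "s > 0" unfolding s_def using p1 by simp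
    have sm: "-1 / (p - 1) = - s" unfolding s_def by simp
    define u where "u = (\<lambda>y. w y powr (- s))"
    have um [measurable]: "u \<in> borel_measurable lebesgue" unfolding u_def by measurable
    show ?thesis
    proof (rule exI[of _ C1], rule conjI[OF C1], intro allI impI)
      fix x :: 'a and r :: real assume r: "r > 0"
      let ?B = "ball x r"
      note bf = ball_facts[OF r, of x]
      define A where "A = avg ?B w"
      have Apos: "A > 0" using weight_pos_int[OF wt r] bf(3) unfolding A_def avg_def by simp
      have uint: "set_integrable lebesgue ?B u"
        using ui[rule_format, of x r] unfolding u_def sm
        by (meson ball_subset_cball bf(1) set_integrable_subset)
      have ae: "AE y in lebesgue. u y = exp (- s * ln (w y)) \<and> \<bar>ln (w y)\<bar> \<le> w y + u y / s"
        using wp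
      proof eventually_elim
        case (elim y)
        have ue: "u y = exp (- s * ln (w y))" unfolding u_def using elim by (simp add: powr_def)
        have "ln (w y) \<le> w y - 1" using elim by (rule ln_le_minus_one)
        moreover have "1 + (- s * ln (w y)) \<le> u y" unfolding ue by (rule exp_ge_add_one_self)
        then have "- ln (w y) \<le> u y / s" using s by (simp add: pos_le_divide_eq algebra_simps)
        moreover have "0 \<le> u y / s" using ue s by simp
        ultimately show ?case using ue elim by (simp only: abs_le_iff) linarith
      qed
      have int: "set_integrable lebesgue ?B (\<lambda>y. ln (w y))"
      proof (rule set_integrable_bound[where f="\<lambda>y. w y + u y / s"])
        show "set_integrable lebesgue ?B (\<lambda>y. w y + u y / s)"
          using weight_ball_int[OF wt] uint by (intro set_integral_add) auto
        show "set_borel_measurable lebesgue ?B (\<lambda>y. ln (w y))"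
          unfolding set_borel_measurable_def using bf(1) by measurable
        show "AE y in lebesgue. y \<in> ?B \<longrightarrow> norm (ln (w y)) \<le> norm (w y + u y / s)"
          using ae by eventually_elim auto
      qed
      define a where "a = avg ?B (\<lambda>y. ln (w y))"
      have fint: "set_integrable lebesgue ?B (\<lambda>y. - s * ln (w y))" by (rule set_integrable_mult_right) (rule int)
      have eint: "set_integrable lebesgue ?B (\<lambda>y. exp (- s * ln (w y)))"
      proof -
        have "set_integrable lebesgue ?B u = set_integrable lebesgue ?B (\<lambda>y. exp (- s * ln (w y)))"
          by (rule set_integrable_cong_AE) (use ae bf(1) in auto)
        then show ?thesis using uint by simp
      qed
      have eeq: "(LINT y:?B|lebesgue. exp (- s * ln (w y))) = (LINT y:?B|lebesgue. u y)"
        by (rule set_lebesgue_integral_cong_AE) (use ae bf(1) in auto)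
      have favg: "avg ?B (\<lambda>y. - s * ln (w y)) = - s * a"
        unfolding avg_def a_def using set_integral_mult_right[of lebesgue ?B "- s" "\<lambda>y. ln (w y)"] by simp
      have "measure lebesgue ?B * exp (- s * a) \<le> (LINT y:?B|lebesgue. u y)"
        using exp_jensen_set[OF bf fint eint] favg eeq by simp
      then have ua: "exp (- s * a) \<le> avg ?B u"
        unfolding avg_def using bf(3) by (simp add: pos_le_divide_eq mult.commute)
      have "exp (- s * a) powr (p - 1) \<le> (avg ?B u) powr (p - 1)"
        by (rule powr_mono2) (use p1 ua in auto)
      moreover have "exp (- s * a) powr (p - 1) = exp (- a)"
        unfolding powr_def using p1 by (simp add: s_def)
      ultimately have "A * exp (- a) \<le> A * (avg ?B u) powr (p - 1)"
        using Apos by (intro mult_left_mono) auto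
      also have "\<dots> \<le> C0" using C0[THEN spec[of _ x], THEN spec[of _ r], THEN mp, OF r] unfolding A_def u_def sm .
      also have "\<dots> \<le> C1" unfolding C1_def by simp
      finally have "A * exp (- a) \<le> C1" .
      then have "A \<le> C1 * exp a"
        by (simp add: exp_minus field_simps)
      then show "set_integrable lebesgue ?B (\<lambda>y. ln (w y)) \<and> avg ?B w \<le> C1 * exp (avg ?B (\<lambda>y. ln (w y)))"
        using int A_def a_def by simp
    qed
  qed
qed


lemma set_integrable_sum':
  fixes f :: "'i \<Rightarrow> 'a \<Rightarrow> real"
  assumes "\<And>i. i \<in> I \<Longrightarrow> set_integrable M A (f i)"
  shows "set_integrable M A (\<lambda>x. \<Sum>i\<in>I. f i x)"
  using assms unfolding set_integrable_def by (simp add: sum_distrib_left)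

lemma set_integral_sum':
  fixes f :: "'i \<Rightarrow> 'a \<Rightarrow> real"
  assumes "\<And>i. i \<in> I \<Longrightarrow> set_integrable M A (f i)"
  shows "(LINT x:A|M. (\<Sum>i\<in>I. f i x)) = (\<Sum>i\<in>I. (LINT x:A|M. f i x))"
  using assms unfolding set_integrable_def set_lebesgue_integral_def
  by (simp add: sum_distrib_left integral_sum)

lemma wamgm:
  fixes x t :: "'i \<Rightarrow> real"
  assumes "finite S" "S \<noteq> {}" "(\<Sum>i\<in>S. t i) = 1" "\<And>i. i \<in> S \<Longrightarrow> t i \<ge> 0"
    "\<And>i. i \<in> S \<Longrightarrow> x i > 0"
  shows "(\<Prod>i\<in>S. x i powr t i) \<le> (\<Sum>i\<in>S. t i * x i)"
proof -
  have "exp (\<Sum>i\<in>S. t i *\<^sub>R ln (x i)) \<le> (\<Sum>i\<in>S. t i * exp (ln (x i)))"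
    by (rule convex_on_sum[OF assms(1,2) exp_convex assms(3)]) (use assms(4) in auto)
  moreover have "exp (\<Sum>i\<in>S. t i *\<^sub>R ln (x i)) = (\<Prod>i\<in>S. x i powr t i)"
    using assms(1,5) by (auto simp add: exp_sum powr_def mult.commute intro!: prod.cong) (metis less_irrefl)
  moreover have "(\<Sum>i\<in>S. t i * exp (ln (x i))) = (\<Sum>i\<in>S. t i * x i)"
    using assms(5) by simp
  ultimately show ?thesis by simp
qed


theorem lemma2p2:
  fixes m :: nat and p :: "nat \<Rightarrow> real" and P :: real
    and \<omega> :: "nat \<Rightarrow> 'a::euclidean_space \<Rightarrow> real"
  assumes "m \<ge> 1"
    and "\<forall>i<m. 1 \<le> p i"
    and "1 / P = (\<Sum>i<m. 1 / p i)"
    and "\<forall>i<m. A_infty (\<omega> i)"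
    and "A_infty (\<lambda>x. \<Prod>i<m. \<omega> i x powr (P / p i))"
  shows "\<exists>c>0. \<forall>x r. r > 0 \<longrightarrow>
     (\<Prod>i<m. (LINT y:ball x r|lebesgue. \<omega> i y) powr (P / p i))
        \<le> c * (LINT y:ball x r|lebesgue. (\<Prod>i<m. \<omega> i y powr (P / p i)))
   \<and> (LINT y:ball x r|lebesgue. (\<Prod>i<m. \<omega> i y powr (P / p i)))
        \<le> c * (\<Prod>i<m. (LINT y:ball x r|lebesgue. \<omega> i y) powr (P / p i))"
proof -
  define \<theta> where "\<theta> = (\<lambda>i. P / p i)"
  define S where "S = {..<m}"
  define v where "v = (\<lambda>y. \<Prod>i\<in>S. \<omega> i y powr \<theta> i)"
  have Sf: "finite S" "S \<noteq> {}" unfolding S_def using assms(1) by (auto simp: lessThan_empty_iff)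
  have pp: "\<And>i. i \<in> S \<Longrightarrow> p i > 0" using assms(2) unfolding S_def by force
  have "(\<Sum>i<m. 1 / p i) > 0"
    using pp Sf unfolding S_def by (intro sum_pos) auto
  then have Ppos: "P > 0" using assms(3) by (metis zero_less_divide_1_iff)
  have th0: "\<And>i. i \<in> S \<Longrightarrow> \<theta> i \<ge> 0" unfolding \<theta>_def using pp Ppos by (simp add: less_imp_le)
  have ths: "(\<Sum>i\<in>S. \<theta> i) = 1"
  proof -
    have "(\<Sum>i\<in>S. \<theta> i) = P * (\<Sum>i<m. 1 / p i)"
      unfolding \<theta>_def S_def by (simp add: sum_distrib_left)
    also have "\<dots> = 1" using assms(3) Ppos by (simp flip: assms(3))
    finally show ?thesis .
  qed
  have wt: "\<And>i. i \<in> S \<Longrightarrow> weight (\<omega> i)"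
    using assms(4) unfolding S_def A_infty_def A_p_def by blast
  have wm [measurable]: "\<And>i. i \<in> S \<Longrightarrow> \<omega> i \<in> borel_measurable lebesgue"
    using wt unfolding weight_def by blast
  have vwt: "weight v" using assms(5) unfolding v_def \<theta>_def S_def A_infty_def A_p_def by blast
  have vm [measurable]: "v \<in> borel_measurable lebesgue" using vwt unfolding weight_def by blast
  have vnn: "\<And>y. v y \<ge> 0" unfolding v_def by (simp add: prod_nonneg)
  have "\<forall>i\<in>S. \<exists>C>0. \<forall>x r. r > 0 \<longrightarrow> set_integrable lebesgue (ball x r) (\<lambda>y. ln (\<omega> i y))
           \<and> avg (ball x r) (\<omega> i) \<le> C * exp (avg (ball x r) (\<lambda>y. ln (\<omega> i y)))"
    using assms(4) Ainf_rev unfolding S_def by blast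
  then obtain C where C: "\<forall>i\<in>S. C i > 0 \<and> (\<forall>x r. r > 0 \<longrightarrow> set_integrable lebesgue (ball x r) (\<lambda>y. ln (\<omega> i y))
           \<and> avg (ball x r) (\<omega> i) \<le> C i * exp (avg (ball x r) (\<lambda>y. ln (\<omega> i y))))"
    using bchoice by metis
  define K where "K = (\<Prod>i\<in>S. C i powr \<theta> i)"
  define c where "c = max K 1"
  have c1: "c \<ge> 1" "K \<le> c" unfolding c_def by auto
  have ae: "AE y in lebesgue. \<forall>i\<in>S. 0 < \<omega> i y"
    using wt unfolding weight_def by (intro eventually_ball_finite Sf) auto
  have main: "\<forall>x r. r > 0 \<longrightarrow>
     (\<Prod>i\<in>S. (LINT y:ball x r|lebesgue. \<omega> i y) powr \<theta> i) \<le> c * (LINT y:ball x r|lebesgue. v y)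
   \<and> (LINT y:ball x r|lebesgue. v y) \<le> c * (\<Prod>i\<in>S. (LINT y:ball x r|lebesgue. \<omega> i y) powr \<theta> i)"
  proof (intro allI impI)
    fix x :: 'a and r :: real assume r: "r > 0"
    let ?B = "ball x r"
    note bf = ball_facts[OF r, of x]
    define \<mu> where "\<mu> = measure lebesgue ?B"
    have \<mu>: "\<mu> > 0" unfolding \<mu>_def using bf(3) .
    define I where "I = (\<lambda>i. LINT y:?B|lebesgue. \<omega> i y)"
    define A where "A = (\<lambda>i. avg ?B (\<omega> i))"
    define a where "a = (\<lambda>i. avg ?B (\<lambda>y. ln (\<omega> i y)))"
    define V where "V = (LINT y:?B|lebesgue. v y)"
    have IA: "\<And>i. I i = \<mu> * A i" unfolding I_def A_def avg_def \<mu>_def using bf(3) by simp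
    have Ipos: "\<And>i. i \<in> S \<Longrightarrow> I i > 0" unfolding I_def using weight_pos_int[OF wt r] by blast
    have Apos: "\<And>i. i \<in> S \<Longrightarrow> A i > 0" using Ipos IA \<mu> by (metis zero_less_mult_pos)
    have wint: "\<And>i. i \<in> S \<Longrightarrow> set_integrable lebesgue ?B (\<omega> i)" using weight_ball_int[OF wt] by blast
    have lint: "\<And>i. i \<in> S \<Longrightarrow> set_integrable lebesgue ?B (\<lambda>y. ln (\<omega> i y))" using C r by blast
    have Ale: "\<And>i. i \<in> S \<Longrightarrow> A i \<le> C i * exp (a i)" using C r unfolding A_def a_def by blast
    have vint: "set_integrable lebesgue ?B v" using weight_ball_int[OF vwt] .
    have V0: "V \<ge> 0" unfolding V_def set_lebesgue_integral_def
      by (intro integral_nonneg_AE AE_I2) (simp add: vnn)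
    have \<mu>prod: "(\<Prod>i\<in>S. \<mu> powr \<theta> i) = \<mu>"
      using powr_sum[of \<mu> \<theta> S] ths \<mu> by simp
    define f where "f = (\<lambda>y. \<Sum>i\<in>S. \<theta> i * ln (\<omega> i y))"
    have fm [measurable]: "f \<in> borel_measurable lebesgue"
      unfolding f_def by (intro borel_measurable_sum) measurable
    have vexp: "AE y in lebesgue. v y = exp (f y)"
      using ae
    proof eventually_elim
      case (elim y)
      have "v y = (\<Prod>i\<in>S. exp (\<theta> i * ln (\<omega> i y)))"
        unfolding v_def using elim by (auto simp: powr_def mult.commute intro!: prod.cong)
      also have "\<dots> = exp (f y)" unfolding f_def using Sf(1) by (simp add: exp_sum)
      finally show ?case .
    qed
    have fint: "set_integrable lebesgue ?B f"
      unfolding f_def by (intro set_integrable_sum' set_integrable_mult_right lint)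
    have eint: "set_integrable lebesgue ?B (\<lambda>y. exp (f y))"
    proof -
      have "set_integrable lebesgue ?B v = set_integrable lebesgue ?B (\<lambda>y. exp (f y))"
        by (rule set_integrable_cong_AE) (use vexp bf(1) in auto)
      then show ?thesis using vint by simp
    qed
    have eV: "(LINT y:?B|lebesgue. exp (f y)) = V"
      unfolding V_def by (rule set_lebesgue_integral_cong_AE) (use vexp bf(1) in auto)
    have avgf: "avg ?B f = (\<Sum>i\<in>S. \<theta> i * a i)"
    proof -
      have "(LINT y:?B|lebesgue. f y) = (\<Sum>i\<in>S. (LINT y:?B|lebesgue. \<theta> i * ln (\<omega> i y)))"
        unfolding f_def by (rule set_integral_sum') (intro set_integrable_mult_right lint, assumption)
      also have "\<dots> = (\<Sum>i\<in>S. \<theta> i * (LINT y:?B|lebesgue. ln (\<omega> i y)))"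
        by (intro sum.cong refl) (rule set_integral_mult_right)
      finally show ?thesis unfolding avg_def a_def by (simp add: sum_divide_distrib)
    qed
    have J: "\<mu> * exp (avg ?B f) \<le> V"
      using exp_jensen_set[OF bf fint eint] eV unfolding \<mu>_def by simp
    have "(\<Prod>i\<in>S. I i powr \<theta> i) \<le> (\<Prod>i\<in>S. (\<mu> * (C i * exp (a i))) powr \<theta> i)"
    proof (rule prod_mono)
      fix i assume i: "i \<in> S"
      have "I i \<le> \<mu> * (C i * exp (a i))" using IA Ale[OF i] \<mu> by (simp add: mult_left_mono)
      then show "0 \<le> I i powr \<theta> i \<and> I i powr \<theta> i \<le> (\<mu> * (C i * exp (a i))) powr \<theta> i"
        using Ipos[OF i] th0[OF i] by (auto intro: powr_mono2)
    qed
    also have "\<dots> = (\<Prod>i\<in>S. \<mu> powr \<theta> i * (C i powr \<theta> i * exp (\<theta> i * a i)))"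
    proof (intro prod.cong refl)
      fix i
      have ep: "exp (a i) powr \<theta> i = exp (\<theta> i * a i)" by (simp add: powr_def mult.commute)
      show "(\<mu> * (C i * exp (a i))) powr \<theta> i = \<mu> powr \<theta> i * (C i powr \<theta> i * exp (\<theta> i * a i))"
        by (simp only: powr_mult ep)
    qed
    also have "\<dots> = \<mu> * (K * exp (\<Sum>i\<in>S. \<theta> i * a i))"
      unfolding K_def using Sf(1) \<mu>prod by (simp add: prod.distrib exp_sum)
    also have "\<dots> = K * (\<mu> * exp (avg ?B f))" using avgf by simp
    also have "\<dots> \<le> K * V"
      using J C Sf unfolding K_def by (intro mult_left_mono) (auto intro: prod_nonneg)
    also have "\<dots> \<le> c * V" using c1 V0 by (intro mult_right_mono) auto
    finally have ineq1: "(\<Prod>i\<in>S. I i powr \<theta> i) \<le> c * V" .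
    define G where "G = (\<Prod>i\<in>S. A i powr \<theta> i)"
    have G0: "G \<ge> 0" unfolding G_def by (simp add: prod_nonneg)
    define g where "g = (\<lambda>y. G * (\<Sum>i\<in>S. \<theta> i * (\<omega> i y / A i)))"
    have gint: "set_integrable lebesgue ?B g"
      unfolding g_def
      by (intro set_integrable_mult_right set_integrable_sum' set_integrable_divide wint, assumption)
    have vg: "AE y in lebesgue. y \<in> ?B \<longrightarrow> v y \<le> g y"
      using ae
    proof eventually_elim
      case (elim y)
      have "v y = (\<Prod>i\<in>S. (A i * (\<omega> i y / A i)) powr \<theta> i)"
        unfolding v_def
      proof (intro prod.cong refl)
        fix i assume "i \<in> S"
        then have "A i \<noteq> 0" using Apos by force
        then show "\<omega> i y powr \<theta> i = (A i * (\<omega> i y / A i)) powr \<theta> i" by simp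
      qed
      also have "\<dots> = G * (\<Prod>i\<in>S. (\<omega> i y / A i) powr \<theta> i)"
        unfolding G_def by (simp only: powr_mult prod.distrib)
      also have "\<dots> \<le> G * (\<Sum>i\<in>S. \<theta> i * (\<omega> i y / A i))"
        using G0 Sf ths th0 elim Apos by (intro mult_left_mono wamgm) auto
      finally show ?case unfolding g_def by simp
    qed
    have "V \<le> (LINT y:?B|lebesgue. g y)"
      unfolding V_def by (rule set_integral_mono_AE[OF vint gint vg])
    also have "(LINT y:?B|lebesgue. g y) = G * (\<Sum>i\<in>S. \<theta> i * (I i / A i))"
    proof -
      have "(LINT y:?B|lebesgue. g y) = G * (LINT y:?B|lebesgue. (\<Sum>i\<in>S. \<theta> i * (\<omega> i y / A i)))"
        unfolding g_def by (rule set_integral_mult_right)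
      also have "(LINT y:?B|lebesgue. (\<Sum>i\<in>S. \<theta> i * (\<omega> i y / A i))) = (\<Sum>i\<in>S. (LINT y:?B|lebesgue. \<theta> i * (\<omega> i y / A i)))"
        by (rule set_integral_sum') (intro set_integrable_mult_right set_integrable_divide wint, assumption)
      also have "\<dots> = (\<Sum>i\<in>S. \<theta> i * (I i / A i))"
        unfolding I_def by (intro sum.cong refl) (simp add: set_integral_divide_zero)
      finally show ?thesis .
    qed
    also have "\<dots> = G * \<mu>"
    proof -
      have "(\<Sum>i\<in>S. \<theta> i * (I i / A i)) = (\<Sum>i\<in>S. \<theta> i * \<mu>)"
        using Apos IA by (intro sum.cong refl) (metis less_irrefl nonzero_mult_div_cancel_right)
      also have "\<dots> = \<mu>" using ths by (simp add: sum_distrib_right[symmetric])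
      finally show ?thesis by simp
    qed
    also have "\<dots> = (\<Prod>i\<in>S. I i powr \<theta> i)"
    proof -
      have "(\<Prod>i\<in>S. I i powr \<theta> i) = (\<Prod>i\<in>S. \<mu> powr \<theta> i * A i powr \<theta> i)"
        by (simp only: IA powr_mult)
      also have "\<dots> = (\<Prod>i\<in>S. \<mu> powr \<theta> i) * G"
        unfolding G_def by (rule prod.distrib)
      finally show ?thesis using \<mu>prod by simp
    qed
    also have "\<dots> \<le> c * (\<Prod>i\<in>S. I i powr \<theta> i)"
      using mult_right_mono[OF c1(1), of "\<Prod>i\<in>S. I i powr \<theta> i"] by (simp add: prod_nonneg)
    finally have ineq2: "V \<le> c * (\<Prod>i\<in>S. I i powr \<theta> i)" .
    show "(\<Prod>i\<in>S. (LINT y:?B|lebesgue. \<omega> i y) powr \<theta> i) \<le> c * (LINT y:?B|lebesgue. v y)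
      \<and> (LINT y:?B|lebesgue. v y) \<le> c * (\<Prod>i\<in>S. (LINT y:?B|lebesgue. \<omega> i y) powr \<theta> i)"
      using ineq1 ineq2 unfolding I_def V_def by simp
  qed
  have cpos: "c > 0" using c1 by simp
  show ?thesis
    using main cpos unfolding v_def \<theta>_def S_def by blast
qed

end
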